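(* For all $X\subseteq\mathrm{Bunch}$ and $Y\in\mathcal C$, the set $X-\!\!\bullet\,Y=\{\Delta\in\mathrm{Bunch}\mid\forall\Delta'\in X.\ (\Delta\mathbin{,}\Delta')\in Y\}$ belongs to $\mathcal C$ (i.e. is closed).
   Context: Formulas of BI: $\varphi,\psi ::= \top \mid \bot \mid \varphi\wedge\psi \mid \varphi\vee\psi \mid \varphi\to\psi \mid \mathsf{emp} \mid \varphi\ast\psi \mid \varphi -\!\!\ast\, \psi \mid a$, $a\in\mathrm{Atom}$. Bunches are finite binary trees whose leaves are formulas or empty bunches $\varnothing_m,\varnothing_a$ and whose internal nodes are labelled by the multiplicative comma ($\Delta_1\mathbin{,}\Delta_2$) or the additive semicolon ($\Delta_1\mathbin{;}\Delta_2$). A bunched context $\Delta(-)$ is a bunch with one leaf replaced by a hole; $\Delta(\Gamma)$ fills it with $\Gamma$. Bunch equivalence $\equiv$ is the least equivalence relation making $\mathbin{,}$ commutative, associative with unit $\varnothing_m$, $\mathbin{;}$ commutative, associative with unit $\varnothing_a$, and closed under contexts; $\mathrm{Bunch}$ is the set of bunches modulo $\equiv$, a commutative monoid under $\Delta\cdot\Delta'=(\Delta\mathbin{,}\Delta')$ with unit $\varnothing_m$, and $X-\!\!\bullet\,Y$ denotes the residual of this monoid's pointwise product on $\mathcal P(\mathrm{Bunch})$. The cut-free BI sequent calculus ($\Delta\vdash_{\mathsf{cf}}\varphi$) has the rules: (ax) $a\vdash a$ for atoms $a$; (equiv) from $\Delta'\vdash\varphi$, $\Delta\equiv\Delta'$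 infer $\Delta\vdash\varphi$; (W;) from $\Delta(\Delta_1)\vdash\varphi$ infer $\Delta(\Delta_1\mathbin{;}\Delta_2)\vdash\varphi$; (C;) from $\Delta(\Delta_1\mathbin{;}\Delta_1)\vdash\varphi$ infer $\Delta(\Delta_1)\vdash\varphi$; (empR) $\varnothing_m\vdash\mathsf{emp}$; (empL) from $\Delta(\varnothing_m)\vdash\varphi$ infer $\Delta(\mathsf{emp})\vdash\varphi$; ($\ast$R) from $\Delta_1\vdash\varphi$, $\Delta_2\vdash\psi$ infer $\Delta_1\mathbin{,}\Delta_2\vdash\varphi\ast\psi$; ($\ast$L) from $\Delta(\varphi\mathbin{,}\psi)\vdash\chi$ infer $\Delta(\varphi\ast\psi)\vdash\chi$; ($-\!\ast$R) from $\Delta\mathbin{,}\varphi\vdash\psi$ infer $\Delta\vdash\varphi-\!\!\ast\,\psi$; ($-\!\ast$L) from $\Delta_1\vdash\varphi$, $\Delta(\Delta_2\mathbin{,}\psi)\vdash\chi$ infer $\Delta((\Delta_1\mathbin{,}\Delta_2)\mathbin{,}(\varphi-\!\!\ast\,\psi))\vdash\chi$; ($\top$R) $\varnothing_a\vdash\top$; ($\top$L) from $\Delta(\varnothing_a)\vdash\varphi$ infer $\Delta(\top)\vdash\varphi$; ($\wedge$R) from $\Delta_1\vdash\varphi$, $\Delta_2\vdash\psi$ infer $\Delta_1\mathbin{;}\Delta_2\vdash\varphi\wedge\psi$; ($\wedge$L) from $\Delta(\varphi\mathbin{;}\psi)\vdash\chi$ infer $\Delta(\varphi\wedge\psi)\vdash\chi$;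 ($\to$R) from $\Delta\mathbin{;}\varphi\vdash\psi$ infer $\Delta\vdash\varphi\to\psi$; ($\to$L) from $\Delta_1\vdash\varphi$, $\Delta(\Delta_2\mathbin{;}\psi)\vdash\chi$ infer $\Delta((\Delta_1\mathbin{;}\Delta_2)\mathbin{;}(\varphi\to\psi))\vdash\chi$; ($\bot$L) $\Delta(\bot)\vdash\varphi$; ($\vee$R1/2) from $\Delta\vdash\varphi$ (resp. $\Delta\vdash\psi$) infer $\Delta\vdash\varphi\vee\psi$; ($\vee$L) from $\Delta(\varphi)\vdash\chi$, $\Delta(\psi)\vdash\chi$ infer $\Delta(\varphi\vee\psi)\vdash\chi$. (No cut rule.) For a formula $\varphi$, $[\![\varphi]\!]^{\mathrm{out}}=\{\Delta\in\mathrm{Bunch}\mid\Delta\vdash_{\mathsf{cf}}\varphi\}$. For $X\subseteq\mathrm{Bunch}$, $\mathrm{cl}(X)=\bigcap\{[\![\varphi]\!]^{\mathrm{out}}\mid X\subseteq[\![\varphi]\!]^{\mathrm{out}}\}$, and $\mathcal C=\{X\subseteq\mathrm{Bunch}\mid X=\mathrm{cl}(X)\}$. *)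

theory Defs
  imports Main
begin

datatype 'a fml =
    FTop | FBot | FAnd "'a fml" "'a fml" | FOr "'a fml" "'a fml" | FImp "'a fml" "'a fml"
  | FEmp | FStar "'a fml" "'a fml" | FWand "'a fml" "'a fml" | FAtom 'a

datatype 'a bunch =
    BFml "'a fml"
  | EmpM
  | EmpA
  | Comma "'a bunch" "'a bunch"
  | Semi "'a bunch" "'a bunch"

datatype 'a ctx =
    Hole
  | CommaL "'a ctx" "'a bunch" | CommaR "'a bunch" "'a ctx"
  | SemiL "'a ctx" "'a bunch"  | SemiR "'a bunch" "'a ctx"

fun fill :: "'a ctx \<Rightarrow> 'a bunch \<Rightarrow> 'a bunch" where
  "fill Hole G = G"
| "fill (CommaL C D) G = Comma (fill C G) D"
| "fill (CommaR D C) G = Comma D (fill C G)"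
| "fill (SemiL C D) G = Semi (fill C G) D"
| "fill (SemiR D C) G = Semi D (fill C G)"

inductive beq :: "'a bunch \<Rightarrow> 'a bunch \<Rightarrow> bool" where
  beq_refl: "beq G G"
| beq_sym: "beq G G' \<Longrightarrow> beq G' G"
| beq_trans: "beq G G' \<Longrightarrow> beq G' G'' \<Longrightarrow> beq G G''"
| comma_comm: "beq (Comma G1 G2) (Comma G2 G1)"
| comma_assoc: "beq (Comma (Comma G1 G2) G3) (Comma G1 (Comma G2 G3))"
| comma_unit: "beq (Comma G EmpM) G"
| semi_comm: "beq (Semi G1 G2) (Semi G2 G1)"
| semi_assoc: "beq (Semi (Semi G1 G2) G3) (Semi G1 (Semi G2 G3))"
| semi_unit: "beq (Semi G EmpA) G"
| beq_ctx: "beq G G' \<Longrightarrow> beq (fill C G) (fill C G')"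

lemma equivp_beq: "equivp beq"
  by (intro equivpI reflpI sympI transpI) (auto intro: beq.intros)

quotient_type 'a Bunch = "'a bunch" / beq
  by (rule equivp_beq)

inductive cf :: "'a bunch \<Rightarrow> 'a fml \<Rightarrow> bool" where
  ax: "cf (BFml (FAtom a)) (FAtom a)"
| equiv: "cf D' \<phi> \<Longrightarrow> beq D D' \<Longrightarrow> cf D \<phi>"
| weakSemi: "cf (fill C D1) \<phi> \<Longrightarrow> cf (fill C (Semi D1 D2)) \<phi>"
| contrSemi: "cf (fill C (Semi D1 D1)) \<phi> \<Longrightarrow> cf (fill C D1) \<phi>"
| empR: "cf EmpM FEmp"
| empL: "cf (fill C EmpM) \<phi> \<Longrightarrow> cf (fill C (BFml FEmp)) \<phi>"
| starR: "cf D1 \<phi> \<Longrightarrow> cf D2 \<psi> \<Longrightarrow> cf (Comma D1 D2) (FStar \<phi> \<psi>)"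
| starL: "cf (fill C (Comma (BFml \<phi>) (BFml \<psi>))) \<chi> \<Longrightarrow> cf (fill C (BFml (FStar \<phi> \<psi>))) \<chi>"
| wandR: "cf (Comma D (BFml \<phi>)) \<psi> \<Longrightarrow> cf D (FWand \<phi> \<psi>)"
| wandL: "cf D1 \<phi> \<Longrightarrow> cf (fill C (Comma D2 (BFml \<psi>))) \<chi> \<Longrightarrow>
          cf (fill C (Comma (Comma D1 D2) (BFml (FWand \<phi> \<psi>)))) \<chi>"
| topR: "cf EmpA FTop"
| topL: "cf (fill C EmpA) \<phi> \<Longrightarrow> cf (fill C (BFml FTop)) \<phi>"
| andR: "cf D1 \<phi> \<Longrightarrow> cf D2 \<psi> \<Longrightarrow> cf (Semi D1 D2) (FAnd \<phi> \<psi>)"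
| andL: "cf (fill C (Semi (BFml \<phi>) (BFml \<psi>))) \<chi> \<Longrightarrow> cf (fill C (BFml (FAnd \<phi> \<psi>))) \<chi>"
| impR: "cf (Semi D (BFml \<phi>)) \<psi> \<Longrightarrow> cf D (FImp \<phi> \<psi>)"
| impL: "cf D1 \<phi> \<Longrightarrow> cf (fill C (Semi D2 (BFml \<psi>))) \<chi> \<Longrightarrow>
          cf (fill C (Semi (Semi D1 D2) (BFml (FImp \<phi> \<psi>)))) \<chi>"
| botL: "cf (fill C (BFml FBot)) \<phi>"
| orR1: "cf D \<phi> \<Longrightarrow> cf D (FOr \<phi> \<psi>)"
| orR2: "cf D \<psi> \<Longrightarrow> cf D (FOr \<phi> \<psi>)"
| orL: "cf (fill C (BFml \<phi>)) \<chi> \<Longrightarrow> cf (fill C (BFml \<psi>)) \<chi> \<Longrightarrow> cf (fill C (BFml (FOr \<phi> \<psi>))) \<chi>"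

definition bcomma :: "'a Bunch \<Rightarrow> 'a Bunch \<Rightarrow> 'a Bunch" where
  "bcomma D D' = abs_Bunch (Comma (rep_Bunch D) (rep_Bunch D'))"

definition resid :: "'a Bunch set \<Rightarrow> 'a Bunch set \<Rightarrow> 'a Bunch set" where
  "resid X Y = {D. \<forall>D'\<in>X. bcomma D D' \<in> Y}"

definition out :: "'a fml \<Rightarrow> 'a Bunch set" where
  "out \<phi> = {D. cf (rep_Bunch D) \<phi>}"

definition cl :: "'a Bunch set \<Rightarrow> 'a Bunch set" where
  "cl X = \<Inter> {out \<phi> | \<phi>. X \<subseteq> out \<phi>}"

definition closedSets :: "'a Bunch set set" where
  "closedSets = {X. X = cl X}"

end

theory Submission
  imports Defs
begin

fun U :: "'a fml \<Rightarrow> 'a bunch" where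
  "U (FStar a b) = Comma (U a) (U b)"
| "U (FAnd a b) = Semi (U a) (U b)"
| "U FEmp = EmpM"
| "U FTop = EmpA"
| "U f = BFml f"

fun mapU :: "'a bunch \<Rightarrow> 'a bunch" where
  "mapU (BFml f) = U f"
| "mapU EmpM = EmpM"
| "mapU EmpA = EmpA"
| "mapU (Comma a b) = Comma (mapU a) (mapU b)"
| "mapU (Semi a b) = Semi (mapU a) (mapU b)"

fun mapC :: "'a ctx \<Rightarrow> 'a ctx" where
  "mapC Hole = Hole"
| "mapC (CommaL C D) = CommaL (mapC C) (mapU D)"
| "mapC (CommaR D C) = CommaR (mapU D) (mapC C)"
| "mapC (SemiL C D) = SemiL (mapC C) (mapU D)"
| "mapC (SemiR D C) = SemiR (mapU D) (mapC C)"

fun F :: "'a bunch \<Rightarrow> 'a fml" where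
  "F (BFml f) = f"
| "F EmpM = FEmp"
| "F EmpA = FTop"
| "F (Comma a b) = FStar (F a) (F b)"
| "F (Semi a b) = FAnd (F a) (F b)"

fun cc :: "'a ctx \<Rightarrow> 'a ctx \<Rightarrow> 'a ctx" where
  "cc Hole D = D"
| "cc (CommaL C B) D = CommaL (cc C D) B"
| "cc (CommaR B C) D = CommaR B (cc C D)"
| "cc (SemiL C B) D = SemiL (cc C D) B"
| "cc (SemiR B C) D = SemiR B (cc C D)"

lemma fill_cc[simp]: "fill (cc C D) G = fill C (fill D G)"
  by (induction C) auto

lemma mapU_fill[simp]: "mapU (fill C G) = fill (mapC C) (mapU G)"
  by (induction C) auto

lemma UF: "U (F G) = mapU G"
  by (induction G) auto

lemma beq_mapU: "beq D D' \<Longrightarrow> beq (mapU D) (mapU D')"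
proof (induction rule: beq.induct)
  case (beq_ctx G G' C)
  then show ?case by (simp add: beq.beq_ctx)
qed (auto intro: beq.intros)

lemma L2: "cf (fill C (U \<phi>)) \<chi> \<Longrightarrow> cf (fill C (BFml \<phi>)) \<chi>"
proof (induction \<phi> arbitrary: C)
  case (FAnd a b)
  have "cf (fill (cc C (SemiL Hole (U b))) (U a)) \<chi>" using FAnd.prems by simp
  then have "cf (fill (cc C (SemiR (BFml a) Hole)) (U b)) \<chi>" using FAnd.IH(1) by fastforce
  then have "cf (fill C (Semi (BFml a) (BFml b))) \<chi>" using FAnd.IH(2) by fastforce
  then show ?case by (rule cf.andL)
next
  case (FStar a b)
  have "cf (fill (cc C (CommaL Hole (U b))) (U a)) \<chi>" using FStar.prems by simp
  then have "cf (fill (cc C (CommaR (BFml a) Hole)) (U b)) \<chi>" using FStar.IH(1) by fastforce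
  then have "cf (fill C (Comma (BFml a) (BFml b))) \<chi>" using FStar.IH(2) by fastforce
  then show ?case by (rule cf.starL)
next
  case FEmp then show ?case by (simp add: cf.empL)
next
  case FTop then show ?case by (simp add: cf.topL)
qed auto

lemma L2': "cf (fill C (mapU G)) \<chi> \<Longrightarrow> cf (fill C G) \<chi>"
proof (induction G arbitrary: C)
  case (BFml f) then show ?case using L2 by simp
next
  case (Comma a b)
  have "cf (fill (cc C (CommaL Hole (mapU b))) (mapU a)) \<chi>" using Comma.prems by simp
  then have "cf (fill (cc C (CommaR a Hole)) (mapU b)) \<chi>" using Comma.IH(1) by fastforce
  then show ?case using Comma.IH(2) by fastforce
next
  case (Semi a b)
  have "cf (fill (cc C (SemiL Hole (mapU b))) (mapU a)) \<chi>" using Semi.prems by simp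
  then have "cf (fill (cc C (SemiR a Hole)) (mapU b)) \<chi>" using Semi.IH(1) by fastforce
  then show ?case using Semi.IH(2) by fastforce
qed auto

lemma L3: "cf (fill C G) \<chi> \<Longrightarrow> cf (fill C (BFml (F G))) \<chi>"
proof (induction G arbitrary: C)
  case (Comma a b)
  have "cf (fill (cc C (CommaL Hole b)) a) \<chi>" using Comma.prems by simp
  then have "cf (fill (cc C (CommaR (BFml (F a)) Hole)) b) \<chi>" using Comma.IH(1) by fastforce
  then have "cf (fill C (Comma (BFml (F a)) (BFml (F b)))) \<chi>" using Comma.IH(2) by fastforce
  then show ?case by (simp add: cf.starL)
next
  case (Semi a b)
  have "cf (fill (cc C (SemiL Hole b)) a) \<chi>" using Semi.prems by simp
  then have "cf (fill (cc C (SemiR (BFml (F a)) Hole)) b) \<chi>" using Semi.IH(1) by fastforce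
  then have "cf (fill C (Semi (BFml (F a)) (BFml (F b)))) \<chi>" using Semi.IH(2) by fastforce
  then show ?case by (simp add: cf.andL)
next
  case EmpM then show ?case by (simp add: cf.empL)
next
  case EmpA then show ?case by (simp add: cf.topL)
qed auto

lemma L1: "cf D \<chi> \<Longrightarrow> cf (mapU D) \<chi>"
proof (induction rule: cf.induct)
  case (ax a) then show ?case by (simp add: cf.ax)
next
  case (equiv D' \<phi> D) then show ?case using beq_mapU cf.equiv by blast
next
  case (weakSemi C D1 \<phi> D2) then show ?case by (simp add: cf.weakSemi)
next
  case (contrSemi C D1 \<phi>) then show ?case using cf.contrSemi by fastforce
next
  case empR then show ?case by (simp add: cf.empR)
next
  case (empL C \<phi>) then show ?case by simp
next
  case (starR D1 \<phi> D2 \<psi>) then show ?case by (simp add: cf.starR)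
next
  case (starL C \<phi> \<psi> \<chi>) then show ?case by simp
next
  case (wandR D \<phi> \<psi>)
  then have "cf (fill (CommaR (mapU D) Hole) (U \<phi>)) \<psi>" by simp
  then have "cf (fill (CommaR (mapU D) Hole) (BFml \<phi>)) \<psi>" by (rule L2)
  then show ?case by (simp add: cf.wandR)
next
  case (wandL D1 \<phi> C D2 \<psi> \<chi>)
  then have "cf (fill (mapC C) (Comma (mapU D2) (U \<psi>))) \<chi>" by simp
  then have "cf (fill (cc (mapC C) (CommaR (mapU D2) Hole)) (U \<psi>)) \<chi>" by simp
  then have "cf (fill (cc (mapC C) (CommaR (mapU D2) Hole)) (BFml \<psi>)) \<chi>" by (rule L2)
  then have "cf (fill (mapC C) (Comma (mapU D2) (BFml \<psi>))) \<chi>" by simp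
  then show ?case using wandL.IH(1) by (simp add: cf.wandL)
next
  case topR then show ?case by (simp add: cf.topR)
next
  case (topL C \<phi>) then show ?case by simp
next
  case (andR D1 \<phi> D2 \<psi>) then show ?case by (simp add: cf.andR)
next
  case (andL C \<phi> \<psi> \<chi>) then show ?case by simp
next
  case (impR D \<phi> \<psi>)
  then have "cf (fill (SemiR (mapU D) Hole) (U \<phi>)) \<psi>" by simp
  then have "cf (fill (SemiR (mapU D) Hole) (BFml \<phi>)) \<psi>" by (rule L2)
  then show ?case by (simp add: cf.impR)
next
  case (impL D1 \<phi> C D2 \<psi> \<chi>)
  then have "cf (fill (cc (mapC C) (SemiR (mapU D2) Hole)) (U \<psi>)) \<chi>" by simp
  then have "cf (fill (cc (mapC C) (SemiR (mapU D2) Hole)) (BFml \<psi>)) \<chi>" by (rule L2)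
  then have "cf (fill (mapC C) (Semi (mapU D2) (BFml \<psi>))) \<chi>" by simp
  then show ?case using impL.IH(1) by (simp add: cf.impL)
next
  case (botL C \<phi>)
  have "cf (fill (mapC C) (BFml FBot)) \<phi>" by (rule cf.botL)
  then show ?case by simp
next
  case (orR1 D \<phi> \<psi>) then show ?case by (simp add: cf.orR1)
next
  case (orR2 D \<psi> \<phi>) then show ?case by (simp add: cf.orR2)
next
  case (orL C \<phi> \<chi> \<psi>)
  have a: "cf (fill (mapC C) (BFml \<phi>)) \<chi>" using orL.IH(1) L2 by simp
  have b: "cf (fill (mapC C) (BFml \<psi>)) \<chi>" using orL.IH(2) L2 by simp
  show ?case using cf.orL[OF a b] by simp
qed

lemma wand_inv: "cf D \<chi> \<Longrightarrow> \<chi> = FWand A B \<Longrightarrow> cf (Comma D (BFml A)) B"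
proof (induction rule: cf.induct)
  case (equiv D' \<phi> D)
  have "beq (fill (CommaL Hole (BFml A)) D) (fill (CommaL Hole (BFml A)) D')"
    using equiv.hyps(2) by (rule beq.beq_ctx)
  then have "beq (Comma D (BFml A)) (Comma D' (BFml A))" by simp
  then show ?case using cf.equiv equiv.IH equiv.prems by blast
next
  case (weakSemi C D1 \<phi> D2)
  then have "cf (fill (CommaL C (BFml A)) (D1)) B" by simp
  then have "cf (fill (CommaL C (BFml A)) (Semi D1 D2)) B" by (rule cf.weakSemi)
  then show ?case by simp
next
  case (contrSemi C D1 \<phi>)
  then have "cf (fill (CommaL C (BFml A)) (Semi D1 D1)) B" by simp
  then have "cf (fill (CommaL C (BFml A)) D1) B" by (rule cf.contrSemi)
  then show ?case by simp
next
  case (empL C \<phi>)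
  then have "cf (fill (CommaL C (BFml A)) (EmpM)) B" by simp
  then have "cf (fill (CommaL C (BFml A)) (BFml FEmp)) B" by (rule cf.empL)
  then show ?case by simp
next
  case (starL C \<phi> \<psi> \<chi>)
  then have "cf (fill (CommaL C (BFml A)) (Comma (BFml \<phi>) (BFml \<psi>))) B" by simp
  then have "cf (fill (CommaL C (BFml A)) (BFml (FStar \<phi> \<psi>))) B" by (rule cf.starL)
  then show ?case by simp
next
  case (topL C \<phi>)
  then have "cf (fill (CommaL C (BFml A)) (EmpA)) B" by simp
  then have "cf (fill (CommaL C (BFml A)) (BFml FTop)) B" by (rule cf.topL)
  then show ?case by simp
next
  case (andL C \<phi> \<psi> \<chi>)
  then have "cf (fill (CommaL C (BFml A)) (Semi (BFml \<phi>) (BFml \<psi>))) B" by simp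
  then have "cf (fill (CommaL C (BFml A)) (BFml (FAnd \<phi> \<psi>))) B" by (rule cf.andL)
  then show ?case by simp
next
  case (wandL D1 \<phi> C D2 \<psi> \<chi>)
  then have "cf (fill (CommaL C (BFml A)) (Comma D2 (BFml \<psi>))) B" by simp
  then have "cf (fill (CommaL C (BFml A)) (Comma (Comma D1 D2) (BFml (FWand \<phi> \<psi>)))) B"
    by (rule cf.wandL[OF wandL.hyps(1)])
  then show ?case by simp
next
  case (impL D1 \<phi> C D2 \<psi> \<chi>)
  then have "cf (fill (CommaL C (BFml A)) (Semi D2 (BFml \<psi>))) B" by simp
  then have "cf (fill (CommaL C (BFml A)) (Semi (Semi D1 D2) (BFml (FImp \<phi> \<psi>)))) B"
    by (rule cf.impL[OF impL.hyps(1)])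
  then show ?case by simp
next
  case (botL C \<phi>)
  have "cf (fill (CommaL C (BFml A)) (BFml FBot)) B" by (rule cf.botL)
  then show ?case by simp
next
  case (orL C \<phi> \<chi> \<psi>)
  then have a: "cf (fill (CommaL C (BFml A)) (BFml \<phi>)) B" and b: "cf (fill (CommaL C (BFml A)) (BFml \<psi>)) B" by simp_all
  from cf.orL[OF a b] show ?case by simp
qed auto

lemma rep_abs_beq: "beq (rep_Bunch (abs_Bunch x)) x"
  using Quotient3_rep_abs[OF Quotient3_Bunch] beq.beq_refl by blast

lemma cf_bcomma: "cf (rep_Bunch (bcomma a b)) \<phi> \<longleftrightarrow> cf (Comma (rep_Bunch a) (rep_Bunch b)) \<phi>"
  unfolding bcomma_def
  using rep_abs_beq cf.equiv beq.beq_sym by blast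

lemma cl_ext: "Z \<subseteq> cl Z"
  unfolding cl_def by blast

theorem lemma6p4:
  fixes X Y :: "'a Bunch set"
  assumes "Y \<in> closedSets"
  shows "resid X Y \<in> closedSets"
proof -
  have Y: "Y = cl Y" using assms closedSets_def by blast
  have "cl (resid X Y) \<subseteq> resid X Y"
  proof
    fix D assume D: "D \<in> cl (resid X Y)"
    show "D \<in> resid X Y" unfolding resid_def
    proof (intro CollectI ballI)
      fix D' assume D': "D' \<in> X"
      have "bcomma D D' \<in> cl Y"
        unfolding cl_def
      proof (intro InterI, clarify)
        fix \<phi> assume Yp: "Y \<subseteq> out \<phi>"
        define \<psi> where "\<psi> = FWand (F (rep_Bunch D')) \<phi>"
        have "resid X Y \<subseteq> out \<psi>"
        proof
          fix G assume "G \<in> resid X Y"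
          then have "bcomma G D' \<in> out \<phi>" using D' Yp unfolding resid_def by blast
          then have "cf (Comma (rep_Bunch G) (rep_Bunch D')) \<phi>"
            unfolding out_def using cf_bcomma by blast
          then have "cf (fill (CommaR (rep_Bunch G) Hole) (rep_Bunch D')) \<phi>" by simp
          then have "cf (fill (CommaR (rep_Bunch G) Hole) (BFml (F (rep_Bunch D')))) \<phi>" by (rule L3)
          then show "G \<in> out \<psi>" unfolding out_def \<psi>_def by (simp add: cf.wandR)
        qed
        then have "D \<in> out \<psi>" using D unfolding cl_def by blast
        then have "cf (Comma (rep_Bunch D) (BFml (F (rep_Bunch D')))) \<phi>"
          unfolding out_def \<psi>_def using wand_inv by blast
        then have "cf (mapU (Comma (rep_Bunch D) (BFml (F (rep_Bunch D'))))) \<phi>" by (rule L1)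
        then have "cf (fill Hole (mapU (Comma (rep_Bunch D) (rep_Bunch D')))) \<phi>" by (simp add: UF)
        then have "cf (Comma (rep_Bunch D) (rep_Bunch D')) \<phi>" using L2' by fastforce
        then show "bcomma D D' \<in> out \<phi>" unfolding out_def using cf_bcomma by blast
      qed
      then show "bcomma D D' \<in> Y" using Y by simp
    qed
  qed
  then show ?thesis unfolding closedSets_def using cl_ext by blast
qed

end
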